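(* Let $X$ be a Baire space and let $Y$ be a first countable, hereditarily Baire $R_0$-space. Then $X\times Y$ is a Baire space.
   Context: A topological space is a Baire space if every countable intersection of dense open subsets is dense. A space is hereditarily Baire if every nonempty closed subspace is a Baire space. A space is $R_0$ if every open set contains the closure of each of its points. *)

theory Defs
  imports "HOL-Analysis.Analysis"
begin

text \<open>A topological space is a Baire space if every countable intersection of
  dense open subsets is dense.  (The empty family is allowed; its intersection is
  taken relative to the whole space.)\<close>
definition Baire_space :: "'a topology \<Rightarrow> bool" where
  "Baire_space X \<longleftrightarrow>
     (\<forall>\<G>. countable \<G> \<and> (\<forall>U\<in>\<G>. openin X U \<and> X closure_of U = topspace X)
        \<longrightarrow> X closure_of (topspace X \<inter> \<Inter>\<G>) = topspace X)"

definition hereditarily_Baire_space :: "'a topology \<Rightarrow> bool" where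
  "hereditarily_Baire_space X \<longleftrightarrow>
     (\<forall>C. closedin X C \<and> C \<noteq> {} \<longrightarrow> Baire_space (subtopology X C))"

definition R0_space :: "'a topology \<Rightarrow> bool" where
  "R0_space X \<longleftrightarrow> (\<forall>U x. openin X U \<and> x \<in> U \<longrightarrow> X closure_of {x} \<subseteq> U)"

end

theory Submission
  imports Defs
begin

lemma dense_disjoint_family:
  assumes P: "openin X P"
    and good: "\<And>Q. openin X Q \<Longrightarrow> Q \<noteq> {} \<Longrightarrow> Q \<subseteq> P \<Longrightarrow> \<exists>U. openin X U \<and> U \<noteq> {} \<and> U \<subseteq> Q \<and> g U"
  shows "\<exists>\<C>. (\<forall>U\<in>\<C>. openin X U \<and> U \<noteq> {} \<and> U \<subseteq> P \<and> g U) \<and> pairwise disjnt \<C>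
             \<and> (\<forall>Q. openin X Q \<and> Q \<inter> P \<noteq> {} \<longrightarrow> (\<exists>U\<in>\<C>. Q \<inter> U \<noteq> {}))"
proof -
  define A where "A = {\<C>. (\<forall>U\<in>\<C>. openin X U \<and> U \<noteq> {} \<and> U \<subseteq> P \<and> g U) \<and> pairwise disjnt \<C>}"
  have "\<forall>C\<in>chains A. \<Union>C \<in> A"
  proof
    fix C assume C: "C \<in> chains A"
    have "pairwise disjnt (\<Union>C)"
    proof (rule pairwiseI)
      fix U V assume "U \<in> \<Union>C" "V \<in> \<Union>C" "U \<noteq> V"
      then obtain c1 c2 where "c1 \<in> C" "c2 \<in> C" "U \<in> c1" "V \<in> c2" by auto
      moreover have "c1 \<subseteq> c2 \<or> c2 \<subseteq> c1" using C \<open>c1 \<in> C\<close> \<open>c2 \<in> C\<close> by (auto simp: chains_def chain_subset_def)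
      moreover have "pairwise disjnt c1" "pairwise disjnt c2" using C \<open>c1 \<in> C\<close> \<open>c2 \<in> C\<close> by (auto simp: chains_def A_def)
      ultimately show "disjnt U V" using \<open>U \<noteq> V\<close> by (metis pairwiseD subsetD)
    qed
    then show "\<Union>C \<in> A" using C by (auto simp: chains_def A_def)
  qed
  then obtain M where M: "M \<in> A" and max: "\<forall>Z\<in>A. M \<subseteq> Z \<longrightarrow> Z = M"
    using Zorn_Lemma by blast
  have "\<exists>U\<in>M. Q \<inter> U \<noteq> {}" if Q: "openin X Q" "Q \<inter> P \<noteq> {}" for Q
  proof (rule ccontr)
    assume no: "\<not> (\<exists>U\<in>M. Q \<inter> U \<noteq> {})"
    obtain U where U: "openin X U" "U \<noteq> {}" "U \<subseteq> Q \<inter> P" "g U"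
      using good[of "Q \<inter> P"] Q P by blast
    have "U \<notin> M" using no U by blast
    have "insert U M \<in> A"
      using M U no unfolding A_def
      by (auto simp: pairwise_insert disjnt_def)
    then show False using max \<open>U \<notin> M\<close> by blast
  qed
  then show ?thesis using M unfolding A_def by blast
qed


definition di :: "nat \<Rightarrow> nat" where "di j = fst (prod_decode j)"
definition dk :: "nat \<Rightarrow> nat" where "dk j = fst (prod_decode (snd (prod_decode j)))"
definition dn :: "nat \<Rightarrow> nat" where "dn j = snd (prod_decode (snd (prod_decode j)))"

lemma di_le: "di j \<le> j"
  unfolding di_def by (metis le_prod_encode_1 prod.collapse prod_decode_inverse)

lemma d_surj: "di (prod_encode (i, prod_encode (k, n))) = i \<and> dk (prod_encode (i, prod_encode (k, n))) = k
   \<and> dn (prod_encode (i, prod_encode (k, n))) = n"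
  by (simp add: di_def dk_def dn_def)

locale PB =
  fixes X :: "'a topology" and Y :: "'b topology" and W :: "nat \<Rightarrow> ('a \<times> 'b) set"
    and B :: "'b \<Rightarrow> nat \<Rightarrow> 'b set" and U0 :: "'a set" and V0 :: "'b set"
  assumes W_open: "openin (prod_topology X Y) (W n)"
    and W_dense: "\<And>T. openin (prod_topology X Y) T \<Longrightarrow> T \<noteq> {} \<Longrightarrow> W n \<inter> T \<noteq> {}"
    and B_open: "y \<in> topspace Y \<Longrightarrow> openin Y (B y k)"
    and B_in: "y \<in> topspace Y \<Longrightarrow> y \<in> B y k"
    and B_base: "openin Y Q \<Longrightarrow> y \<in> Q \<Longrightarrow> \<exists>k. B y k \<subseteq> Q"
    and U0: "openin X U0" "U0 \<noteq> {}" and V0: "openin Y V0" "V0 \<noteq> {}"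
begin

definition valid :: "nat \<Rightarrow> 'a set \<Rightarrow> (nat \<Rightarrow> 'b) \<Rightarrow> bool" where
  "valid m U ys \<longleftrightarrow> openin X U \<and> U \<noteq> {} \<and> U \<subseteq> U0 \<and> ys 0 \<in> V0 \<and> (\<forall>j\<le>m. ys j \<in> topspace Y)
     \<and> (\<forall>j<m. ys (Suc j) \<in> B (ys (di j)) (dk j) \<and> U \<times> {ys (Suc j)} \<subseteq> W (dn j))"

lemma valid_D:
  assumes "valid m U ys"
  shows "openin X U" "U \<noteq> {}" "U \<subseteq> U0" "ys 0 \<in> V0" "j \<le> m \<Longrightarrow> ys j \<in> topspace Y"
    "j < m \<Longrightarrow> ys (Suc j) \<in> B (ys (di j)) (dk j)" "j < m \<Longrightarrow> U \<times> {ys (Suc j)} \<subseteq> W (dn j)"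
  using assms unfolding valid_def by auto

lemma good_exists:
  assumes "valid m U ys" "openin X Q" "Q \<noteq> {}" "Q \<subseteq> U"
  shows "\<exists>U'. openin X U' \<and> U' \<noteq> {} \<and> U' \<subseteq> Q \<and> (\<exists>y. y \<in> B (ys (di m)) (dk m) \<and> U' \<times> {y} \<subseteq> W (dn m))"
proof -
  have yt: "ys (di m) \<in> topspace Y" using assms(1) di_le[of m] unfolding valid_def by simp
  have "openin (prod_topology X Y) (Q \<times> B (ys (di m)) (dk m))"
    using assms(2) B_open[OF yt] by (simp add: openin_prod_Times_iff)
  moreover have "Q \<times> B (ys (di m)) (dk m) \<noteq> {}" using assms(3) B_in[OF yt] by auto
  ultimately have "W (dn m) \<inter> (Q \<times> B (ys (di m)) (dk m)) \<noteq> {}" by (rule W_dense)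
  then obtain x y where xy: "(x,y) \<in> W (dn m)" "x \<in> Q" "y \<in> B (ys (di m)) (dk m)"
    by auto
  have "\<forall>x y. (x,y) \<in> W (dn m) \<longrightarrow> (\<exists>U V. openin X U \<and> openin Y V \<and> x \<in> U \<and> y \<in> V \<and> U \<times> V \<subseteq> W (dn m))"
    using W_open[of "dn m"] unfolding openin_prod_topology_alt .
  from this[rule_format, OF xy(1)]
  obtain U'' V'' where UV: "openin X U''" "openin Y V''" "x \<in> U''" "y \<in> V''" "U'' \<times> V'' \<subseteq> W (dn m)"
    by blast
  have "openin X (U'' \<inter> Q)" using UV(1) assms(2) by (rule openin_Int)
  moreover have "U'' \<inter> Q \<noteq> {}" using UV(3) xy(2) by blast
  moreover have "(U'' \<inter> Q) \<times> {y} \<subseteq> U'' \<times> V''" using UV(4) by auto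
  then have "(U'' \<inter> Q) \<times> {y} \<subseteq> W (dn m)" using UV(5) by (rule subset_trans)
  moreover have "U'' \<inter> Q \<subseteq> Q" by (rule Int_lower2)
  ultimately show ?thesis using xy(3) by metis
qed

lemma children_exist:
  assumes "valid m U ys"
  shows "\<exists>\<C>. (\<forall>U'\<in>\<C>. openin X U' \<and> U' \<noteq> {} \<and> U' \<subseteq> U \<and> (\<exists>y. y \<in> B (ys (di m)) (dk m) \<and> U' \<times> {y} \<subseteq> W (dn m)))
      \<and> pairwise disjnt \<C> \<and> (\<forall>Q. openin X Q \<and> Q \<inter> U \<noteq> {} \<longrightarrow> (\<exists>U'\<in>\<C>. Q \<inter> U' \<noteq> {}))"
  apply (rule dense_disjoint_family)
  using assms apply (simp add: valid_def)
  using good_exists[OF assms] by blast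

lemma valid_child:
  assumes "valid m U ys" "openin X U'" "U' \<noteq> {}" "U' \<subseteq> U" "y \<in> B (ys (di m)) (dk m)" "U' \<times> {y} \<subseteq> W (dn m)"
  shows "valid (Suc m) U' (ys(Suc m := y))"
proof -
  have v: "openin X U" "U \<subseteq> U0" "ys 0 \<in> V0" "\<forall>j\<le>m. ys j \<in> topspace Y"
     "\<forall>j<m. ys (Suc j) \<in> B (ys (di j)) (dk j) \<and> U \<times> {ys (Suc j)} \<subseteq> W (dn j)"
    using assms(1) unfolding valid_def by blast+
  have yt: "ys (di m) \<in> topspace Y" using v(4) di_le[of m] by simp
  have ytop: "y \<in> topspace Y" using assms(5) B_open[OF yt] openin_subset by blast
  have dm: "di m \<noteq> Suc m" using di_le[of m] by auto
  have dj: "di j \<noteq> Suc m" if "j < m" for j using di_le[of j] that by linarith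
  show ?thesis unfolding valid_def
  proof (intro conjI allI impI)
    show "openin X U'" "U' \<noteq> {}" by (fact assms(2), fact assms(3))
    show "U' \<subseteq> U0" using assms(4) v(2) by blast
    show "(ys(Suc m := y)) 0 \<in> V0" using v(3) by simp
    fix j
    show "(ys(Suc m := y)) j \<in> topspace Y" if "j \<le> Suc m"
      using that v(4) ytop by (cases "j = Suc m") auto
  next
    fix j assume j: "j < Suc m"
    show "(ys(Suc m := y)) (Suc j) \<in> B ((ys(Suc m := y)) (di j)) (dk j)"
    proof (cases "j = m")
      case True then show ?thesis using assms(5) dm by simp
    next
      case False then have "j < m" using j by simp
      then show ?thesis using v(5) dj[of j] by simp
    qed
    show "U' \<times> {(ys(Suc m := y)) (Suc j)} \<subseteq> W (dn j)"
    proof (cases "j = m")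
      case True then show ?thesis using assms(6) by simp
    next
      case False then have "j < m" using j by simp
      then show ?thesis using v(5) assms(4) by fastforce
    qed
  qed
qed


lemma main:
  assumes XB: "Baire_space X" and YB: "hereditarily_Baire_space Y"
  shows "\<exists>x y. x \<in> U0 \<and> y \<in> V0 \<and> (\<forall>n. (x,y) \<in> W n)"
proof -
  obtain y0 where y0: "y0 \<in> V0" using V0 by blast
  have y0t: "y0 \<in> topspace Y" using V0 y0 openin_subset by blast
  have valid0: "valid 0 U0 (\<lambda>_. y0)" using U0 y0 y0t by (simp add: valid_def)
  define props where "props m U ys C \<longleftrightarrow>
      (\<forall>U'\<in>C. openin X U' \<and> U' \<noteq> {} \<and> U' \<subseteq> U \<and> (\<exists>y. y \<in> B (ys (di m)) (dk m) \<and> U' \<times> {y} \<subseteq> W (dn m)))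
      \<and> pairwise disjnt C \<and> (\<forall>Q. openin X Q \<and> Q \<inter> U \<noteq> {} \<longrightarrow> (\<exists>U'\<in>C. Q \<inter> U' \<noteq> {}))" for m U ys C
  define fam where "fam m U ys = (SOME C. props m U ys C)" for m U ys
  have fam: "props m U ys (fam m U ys)" if "valid m U ys" for m U ys
    unfolding fam_def by (rule someI_ex) (use children_exist[OF that] in \<open>simp add: props_def\<close>)
  have famU: "openin X U' \<and> U' \<noteq> {} \<and> U' \<subseteq> U \<and> (\<exists>y. y \<in> B (ys (di m)) (dk m) \<and> U' \<times> {y} \<subseteq> W (dn m))"
    if "valid m U ys" "U' \<in> fam m U ys" for m U ys U'
  proof -
    have "\<forall>U'\<in>fam m U ys. openin X U' \<and> U' \<noteq> {} \<and> U' \<subseteq> U \<and> (\<exists>y. y \<in> B (ys (di m)) (dk m) \<and> U' \<times> {y} \<subseteq> W (dn m))"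
      using fam[OF that(1)] unfolding props_def by (rule conjunct1)
    then show ?thesis using that(2) by (rule bspec)
  qed
  have famD: "pairwise disjnt (fam m U ys)" if "valid m U ys" for m U ys
    using fam[OF that] unfolding props_def by (elim conjE)
  have famQ: "\<exists>U'\<in>fam m U ys. Q \<inter> U' \<noteq> {}" if "valid m U ys" "openin X Q" "Q \<inter> U \<noteq> {}" for m U ys Q
  proof -
    have "\<forall>Q. openin X Q \<and> Q \<inter> U \<noteq> {} \<longrightarrow> (\<exists>U'\<in>fam m U ys. Q \<inter> U' \<noteq> {})"
      using fam[OF that(1)] unfolding props_def by (elim conjE)
    then show ?thesis using that(2,3) by blast
  qed
  define yc where "yc m ys U' = (SOME y. y \<in> B (ys (di m)) (dk m) \<and> U' \<times> {y} \<subseteq> W (dn m))" for m ys U'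
  have yc: "yc m ys U' \<in> B (ys (di m)) (dk m) \<and> U' \<times> {yc m ys U'} \<subseteq> W (dn m)"
    if "\<exists>y. y \<in> B (ys (di m)) (dk m) \<and> U' \<times> {y} \<subseteq> W (dn m)" for m ys U'
    unfolding yc_def by (rule someI_ex) (rule that)
  define ch where "ch m s = (\<lambda>U'. (U', (snd s)(Suc m := yc m (snd s) U'))) ` fam m (fst s) (snd s)" for m s
  define Lev where "Lev = rec_nat {(U0, \<lambda>_. y0)} (\<lambda>m L. \<Union>s\<in>L. ch m s)"
  have Lev0: "Lev 0 = {(U0, \<lambda>_. y0)}" by (simp add: Lev_def)
  have LevS: "Lev (Suc m) = (\<Union>s\<in>Lev m. ch m s)" for m by (simp add: Lev_def)
  have inv: "\<forall>s\<in>Lev m. valid m (fst s) (snd s)" for m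
  proof (induction m)
    case 0 then show ?case using valid0 by (simp add: Lev0)
  next
    case (Suc m)
    show ?case
    proof
      fix t assume "t \<in> Lev (Suc m)"
      then obtain s U' where s: "s \<in> Lev m" "U' \<in> fam m (fst s) (snd s)"
        and t: "t = (U', (snd s)(Suc m := yc m (snd s) U'))"
        by (auto simp: LevS ch_def)
      have vs: "valid m (fst s) (snd s)" using Suc s by blast
      have P: "openin X U' \<and> U' \<noteq> {} \<and> U' \<subseteq> fst s \<and> (\<exists>y. y \<in> B (snd s (di m)) (dk m) \<and> U' \<times> {y} \<subseteq> W (dn m))"
        using famU[OF vs s(2)] .
      show "valid (Suc m) (fst t) (snd t)"
        using valid_child[OF vs] P yc[of "snd s" m U'] t by auto
    qed
  qed
  have disj: "\<forall>s\<in>Lev m. \<forall>t\<in>Lev m. s \<noteq> t \<longrightarrow> fst s \<inter> fst t = {}" for m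
  proof (induction m)
    case 0 then show ?case by (simp add: Lev0)
  next
    case (Suc m)
    show ?case
    proof (intro ballI impI)
      fix t1 t2 assume t12: "t1 \<in> Lev (Suc m)" "t2 \<in> Lev (Suc m)" "t1 \<noteq> t2"
      obtain s1 U1 where s1: "s1 \<in> Lev m" "U1 \<in> fam m (fst s1) (snd s1)"
        and t1: "t1 = (U1, (snd s1)(Suc m := yc m (snd s1) U1))"
        using t12(1) by (auto simp: LevS ch_def)
      obtain s2 U2 where s2: "s2 \<in> Lev m" "U2 \<in> fam m (fst s2) (snd s2)"
        and t2: "t2 = (U2, (snd s2)(Suc m := yc m (snd s2) U2))"
        using t12(2) by (auto simp: LevS ch_def)
      note s = s1 s2 and t = t1 t2
      have v1: "valid m (fst s1) (snd s1)" and v2: "valid m (fst s2) (snd s2)" using inv s by blast+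
      show "fst t1 \<inter> fst t2 = {}"
      proof (cases "s1 = s2")
        case True
        then have "U1 \<noteq> U2" using t t12(3) by auto
        then have "disjnt U1 U2" using famD[OF v1] s(2) s(4) True by (metis pairwiseD)
        then show ?thesis using t by (simp add: disjnt_def)
      next
        case False
        then have "fst s1 \<inter> fst s2 = {}" using Suc s by blast
        moreover have "U1 \<subseteq> fst s1" using famU[OF v1 s(2)] by blast
        moreover have "U2 \<subseteq> fst s2" using famU[OF v2 s(4)] by blast
        ultimately show ?thesis using t by auto
      qed
    qed
  qed
  have dense: "\<forall>Q. openin X Q \<and> Q \<inter> U0 \<noteq> {} \<longrightarrow> (\<exists>s\<in>Lev m. Q \<inter> fst s \<noteq> {})" for m
  proof (induction m)
    case 0 then show ?case by (simp add: Lev0)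
  next
    case (Suc m)
    show ?case
    proof (intro allI impI)
      fix Q assume Q: "openin X Q \<and> Q \<inter> U0 \<noteq> {}"
      then obtain s where s: "s \<in> Lev m" "Q \<inter> fst s \<noteq> {}" using Suc by blast
      have v: "valid m (fst s) (snd s)" using inv s by blast
      obtain U' where U': "U' \<in> fam m (fst s) (snd s)" "Q \<inter> U' \<noteq> {}"
        using famQ[OF v] Q s by blast
      have "(U', (snd s)(Suc m := yc m (snd s) U')) \<in> Lev (Suc m)"
        using s U' by (auto simp: LevS ch_def)
      then show "\<exists>t\<in>Lev (Suc m). Q \<inter> fst t \<noteq> {}" using U' by force
    qed
  qed
  have parent: "\<exists>s\<in>Lev m. fst t \<subseteq> fst s \<and> (\<forall>j\<le>m. snd t j = snd s j)" if tL: "t \<in> Lev (Suc m)" for t m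
  proof -
    obtain s where s0: "s \<in> Lev m" "t \<in> ch m s" using tL by (auto simp: LevS)
    then obtain U' where "U' \<in> fam m (fst s) (snd s)" and t: "t = (U', (snd s)(Suc m := yc m (snd s) U'))"
      by (auto simp: ch_def)
    then have s: "s \<in> Lev m" "U' \<in> fam m (fst s) (snd s)" using s0 by auto
    have v: "valid m (fst s) (snd s)" using inv s by blast
    have "U' \<subseteq> fst s" using famU[OF v s(2)] by blast
    then show ?thesis using s t by auto
  qed
  define G where "G m = (\<Union>s\<in>Lev m. fst s) \<union> (topspace X - X closure_of U0)" for m
  have Gopen: "openin X (G m)" for m
    unfolding G_def using inv[of m] by (intro openin_Un openin_Union openin_diff) (auto simp: valid_def)
  have Gdense: "X closure_of (G m) = topspace X" for m
    unfolding dense_intersects_open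
  proof (intro allI impI)
    fix T assume T: "openin X T \<and> T \<noteq> {}"
    show "G m \<inter> T \<noteq> {}"
    proof (cases "T \<inter> U0 = {}")
      case True
      then have "T \<inter> X closure_of U0 = {}" using T openin_Int_closure_of_eq_empty by blast
      then have "T \<subseteq> G m" using T openin_subset unfolding G_def by blast
      then show ?thesis using T by blast
    next
      case False
      then obtain s where s: "s \<in> Lev m" "T \<inter> fst s \<noteq> {}" using dense T by blast
      then obtain z where "z \<in> T" "z \<in> fst s" by blast
      then have "z \<in> G m \<inter> T" using s(1) unfolding G_def by blast
      then show ?thesis by blast
    qed
  qed
  have "X closure_of (topspace X \<inter> \<Inter>(range G)) = topspace X"
    by (rule XB[unfolded Baire_space_def, rule_format]) (use Gopen Gdense in auto)
  then have "\<forall>T. openin X T \<and> T \<noteq> {} \<longrightarrow> (topspace X \<inter> \<Inter>(range G)) \<inter> T \<noteq> {}"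
    by (simp only: dense_intersects_open)
  then have "openin X U0 \<and> U0 \<noteq> {} \<longrightarrow> (topspace X \<inter> \<Inter>(range G)) \<inter> U0 \<noteq> {}"
    by (rule spec)
  then have "(topspace X \<inter> \<Inter>(range G)) \<inter> U0 \<noteq> {}" using U0 by simp
  then obtain x where "x \<in> U0" "x \<in> \<Inter>(range G)" by auto
  then have x: "x \<in> U0" "\<And>m. x \<in> G m" by auto
  have "U0 \<subseteq> X closure_of U0" using openin_subset[OF U0(1)] by (rule closure_of_subset)
  then have xcl: "x \<in> X closure_of U0" using x(1) by (rule subsetD)
  have inLev: "\<exists>s\<in>Lev m. x \<in> fst s" for m
  proof -
    have "x \<in> (\<Union>s\<in>Lev m. fst s) \<union> (topspace X - X closure_of U0)" using x(2)[of m] unfolding G_def .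
    then have "x \<in> (\<Union>s\<in>Lev m. fst s)" using xcl by (simp only: Un_iff Diff_iff) simp
    then show ?thesis by (simp only: UN_iff)
  qed
  have uniq: "\<exists>!s. s \<in> Lev m \<and> x \<in> fst s" for m
  proof -
    obtain s where s: "s \<in> Lev m" "x \<in> fst s" using inLev[of m] by blast
    show ?thesis
    proof (rule ex1I[of _ s])
      show "s \<in> Lev m \<and> x \<in> fst s" using s by blast
      fix t assume t: "t \<in> Lev m \<and> x \<in> fst t"
      show "t = s"
      proof (rule ccontr)
        assume ts: "t \<noteq> s"
        have "fst t \<inter> fst s = {}" using disj[of m, rule_format, OF conjunct1[OF t] s(1)] ts .
        moreover have "x \<in> fst t \<inter> fst s" using s(2) t by simp
        ultimately show False by simp
      qed
    qed
  qed
  define S where "S m = (THE s. s \<in> Lev m \<and> x \<in> fst s)" for m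
  have SS: "S m \<in> Lev m \<and> x \<in> fst (S m)" for m
    unfolding S_def using theI'[OF uniq[of m]] .
  have Spar: "\<forall>j\<le>m. snd (S (Suc m)) j = snd (S m) j" for m
  proof -
    obtain s where s: "s \<in> Lev m" "fst (S (Suc m)) \<subseteq> fst s" "\<forall>j\<le>m. snd (S (Suc m)) j = snd s j"
      using parent[OF conjunct1[OF SS[of "Suc m"]]] by blast
    have "s \<in> Lev m \<and> x \<in> fst s" using s SS[of "Suc m"] by blast
    then have "S m = s" unfolding S_def by (rule the1_equality[OF uniq])
    then have "s = S m" by simp
    then show ?thesis using s by blast
  qed
  define yseq where "yseq j = snd (S j) j" for j
  have coh: "j \<le> m \<Longrightarrow> snd (S m) j = yseq j" for j m
  proof (induction m)
    case 0 then show ?case by (simp add: yseq_def)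
  next
    case (Suc m)
    show ?case
    proof (cases "j = Suc m")
      case True then show ?thesis by (simp add: yseq_def)
    next
      case False
      then have "j \<le> m" using Suc.prems by simp
      then show ?thesis using Spar[of m] Suc.IH by simp
    qed
  qed
  have vS: "valid m (fst (S m)) (snd (S m))" for m using inv[of m] SS[of m] by blast
  have ys0: "yseq 0 \<in> V0" using valid_D(4)[OF vS[of 0]] by (simp add: yseq_def)
  have yst: "yseq j \<in> topspace Y" for j using valid_D(5)[OF vS[of j], of j] by (simp add: yseq_def)
  have ysB: "yseq (Suc j) \<in> B (yseq (di j)) (dk j) \<and> (x, yseq (Suc j)) \<in> W (dn j)" for j
  proof -
    have "snd (S (Suc j)) (Suc j) \<in> B (snd (S (Suc j)) (di j)) (dk j) \<and> fst (S (Suc j)) \<times> {snd (S (Suc j)) (Suc j)} \<subseteq> W (dn j)"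
      using valid_D(6,7)[OF vS[of "Suc j"], of j] by simp
    moreover have "snd (S (Suc j)) (di j) = yseq (di j)" using coh[of "di j" "Suc j"] di_le[of j] by simp
    ultimately show ?thesis using SS[of "Suc j"] by (auto simp: yseq_def)
  qed
  define D where "D = range yseq"
  define F where "F = Y closure_of D"
  have DY: "D \<subseteq> topspace Y" unfolding D_def using yst by auto
  have DF: "D \<subseteq> F" unfolding F_def using closure_of_subset[OF DY] .
  have FY: "F \<subseteq> topspace Y" unfolding F_def by (rule closure_of_subset_topspace)
  have Fne: "F \<noteq> {}" using DF unfolding D_def by auto
  have FB: "Baire_space (subtopology Y F)"
    using YB Fne unfolding hereditarily_Baire_space_def F_def by simp
  have topF: "topspace (subtopology Y F) = F" using FY by auto
  define Sl where "Sl n = {y \<in> topspace Y. (x, y) \<in> W n}" for n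
  have Slopen: "openin Y (Sl n)" for n
  proof (subst openin_subopen, intro ballI)
    fix y assume "y \<in> Sl n"
    then have yW: "(x, y) \<in> W n" unfolding Sl_def by blast
    have "\<forall>x y. (x,y) \<in> W n \<longrightarrow> (\<exists>U V. openin X U \<and> openin Y V \<and> x \<in> U \<and> y \<in> V \<and> U \<times> V \<subseteq> W n)"
      using W_open[of n] unfolding openin_prod_topology_alt .
    from this[rule_format, OF yW]
    obtain U'' V'' where UV: "openin X U''" "openin Y V''" "x \<in> U''" "y \<in> V''" "U'' \<times> V'' \<subseteq> W n"
      by blast
    then have "V'' \<subseteq> Sl n" using openin_subset unfolding Sl_def by blast
    then show "\<exists>T. openin Y T \<and> y \<in> T \<and> T \<subseteq> Sl n" using UV by blast
  qed
  define \<G> where "\<G> = range (\<lambda>n. Sl n \<inter> F)"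
  have Gop: "openin (subtopology Y F) (Sl n \<inter> F)" for n
    using Slopen by (rule openin_subtopology_Int)
  have Gde: "subtopology Y F closure_of (Sl n \<inter> F) = topspace (subtopology Y F)" for n
    unfolding dense_intersects_open
  proof (intro allI impI)
    fix T assume T: "openin (subtopology Y F) T \<and> T \<noteq> {}"
    then obtain Q where Q: "openin Y Q" "T = Q \<inter> F" unfolding openin_subtopology by blast
    then have "Q \<inter> Y closure_of D \<noteq> {}" using T unfolding F_def by auto
    then have "Q \<inter> D \<noteq> {}" using openin_Int_closure_of_eq_empty[OF Q(1)] by blast
    then obtain i where i: "yseq i \<in> Q" unfolding D_def by auto
    obtain k where k: "B (yseq i) k \<subseteq> Q" using B_base[OF Q(1) i] by blast
    define j where "j = prod_encode (i, prod_encode (k, n))"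
    have "yseq (Suc j) \<in> Q" "(x, yseq (Suc j)) \<in> W n" using ysB[of j] d_surj[of i k n] k unfolding j_def by auto
    moreover have "yseq (Suc j) \<in> F" using DF unfolding D_def by auto
    ultimately show "(Sl n \<inter> F) \<inter> T \<noteq> {}" using Q yst unfolding Sl_def by blast
  qed
  have "subtopology Y F closure_of (topspace (subtopology Y F) \<inter> \<Inter>\<G>) = topspace (subtopology Y F)"
    unfolding \<G>_def by (rule FB[unfolded Baire_space_def, rule_format]) (use Gop Gde in auto)
  moreover have "openin (subtopology Y F) (V0 \<inter> F)" using V0(1) by (rule openin_subtopology_Int)
  moreover have "V0 \<inter> F \<noteq> {}" using ys0 DF unfolding D_def by auto
  ultimately have "(topspace (subtopology Y F) \<inter> \<Inter>\<G>) \<inter> (V0 \<inter> F) \<noteq> {}"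
  proof -
    assume a1: "subtopology Y F closure_of (topspace (subtopology Y F) \<inter> \<Inter>\<G>) = topspace (subtopology Y F)"
      and a2: "openin (subtopology Y F) (V0 \<inter> F)" and a3: "V0 \<inter> F \<noteq> {}"
    from a1 have "\<forall>T. openin (subtopology Y F) T \<and> T \<noteq> {} \<longrightarrow> (topspace (subtopology Y F) \<inter> \<Inter>\<G>) \<inter> T \<noteq> {}"
      by (simp only: dense_intersects_open)
    then have "openin (subtopology Y F) (V0 \<inter> F) \<and> V0 \<inter> F \<noteq> {} \<longrightarrow> (topspace (subtopology Y F) \<inter> \<Inter>\<G>) \<inter> (V0 \<inter> F) \<noteq> {}"
      by (rule spec)
    then show ?thesis using a2 a3 by simp
  qed
  then obtain y where "y \<in> V0" "y \<in> \<Inter>\<G>" by auto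
  then have "y \<in> V0" "\<And>n. y \<in> Sl n" unfolding \<G>_def by auto
  then show ?thesis using x(1) unfolding Sl_def by blast
qed

end

theorem corollary3p3:
  fixes X :: "'a topology" and Y :: "'b topology"
  assumes "Baire_space X"
    and "first_countable Y"
    and "hereditarily_Baire_space Y"
    and "R0_space Y"
  shows "Baire_space (prod_topology X Y)"
proof -
  define P where "P y \<B> \<longleftrightarrow> countable \<B> \<and> (\<forall>V\<in>\<B>. openin Y V) \<and>
      (\<forall>U. openin Y U \<and> y \<in> U \<longrightarrow> (\<exists>V\<in>\<B>. y \<in> V \<and> V \<subseteq> U))" for y \<B>
  have fc: "\<exists>\<B>. P y \<B>" if "y \<in> topspace Y" for y
    using assms(2) that unfolding first_countable_def P_def by blast
  define BB where "BB y = (SOME \<B>. P y \<B>)" for y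
  have BB: "P y (BB y)" if "y \<in> topspace Y" for y
    unfolding BB_def using fc[OF that] by (rule someI_ex)
  define N where "N y = {V \<in> BB y. y \<in> V}" for y
  define B where "B y k = from_nat_into (N y) k" for y k
  have Ncount: "countable (N y)" if "y \<in> topspace Y" for y
    using BB[OF that] unfolding N_def P_def by auto
  have Nne: "N y \<noteq> {}" if "y \<in> topspace Y" for y
  proof -
    have "\<exists>V\<in>BB y. y \<in> V \<and> V \<subseteq> topspace Y"
      using BB[OF that] that unfolding P_def by (meson openin_topspace)
    then show ?thesis unfolding N_def by blast
  qed
  have BN: "B y k \<in> N y" if "y \<in> topspace Y" for y k
    unfolding B_def using Nne[OF that] by (rule from_nat_into)
  have B_open: "openin Y (B y k)" if "y \<in> topspace Y" for y k
    using BN[OF that, of k] BB[OF that] unfolding N_def P_def by blast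
  have B_in: "y \<in> B y k" if "y \<in> topspace Y" for y k
    using BN[OF that, of k] unfolding N_def by blast
  have B_base: "\<exists>k. B y k \<subseteq> Q" if Qy: "openin Y Q" "y \<in> Q" for Q y
  proof -
    have yt: "y \<in> topspace Y" using Qy openin_subset by blast
    have "\<forall>U. openin Y U \<and> y \<in> U \<longrightarrow> (\<exists>V\<in>BB y. y \<in> V \<and> V \<subseteq> U)"
      using BB[OF yt] unfolding P_def by blast
    then have "\<exists>V\<in>BB y. y \<in> V \<and> V \<subseteq> Q" using Qy by blast
    then obtain V where V: "V \<in> BB y" "y \<in> V" "V \<subseteq> Q" by blast
    then have "V \<in> N y" unfolding N_def by blast
    then obtain k where "from_nat_into (N y) k = V" using from_nat_into_surj[OF Ncount[OF yt]] by blast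
    then show ?thesis using V unfolding B_def by blast
  qed
  show ?thesis unfolding Baire_space_def
  proof (intro allI impI)
    fix \<G> assume G: "countable \<G> \<and> (\<forall>U\<in>\<G>. openin (prod_topology X Y) U \<and> prod_topology X Y closure_of U = topspace (prod_topology X Y))"
    show "prod_topology X Y closure_of (topspace (prod_topology X Y) \<inter> \<Inter>\<G>) = topspace (prod_topology X Y)"
    proof (cases "\<G> = {}")
      case True then show ?thesis by (simp only: Inter_empty Int_UNIV_right closure_of_topspace)
    next
      case False
      define W where "W = from_nat_into \<G>"
      have WG: "W n \<in> \<G>" for n unfolding W_def using False by (rule from_nat_into)
      have rW: "range W = \<G>" unfolding W_def using range_from_nat_into[OF False] G by blast
      have W_open: "openin (prod_topology X Y) (W n)" for n using G WG by blast
      have W_dense: "W n \<inter> T \<noteq> {}" if "openin (prod_topology X Y) T" "T \<noteq> {}" for n T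
      proof -
        have "prod_topology X Y closure_of (W n) = topspace (prod_topology X Y)" using G WG by blast
        then have "\<forall>T. openin (prod_topology X Y) T \<and> T \<noteq> {} \<longrightarrow> W n \<inter> T \<noteq> {}"
          by (simp only: dense_intersects_open)
        then have "openin (prod_topology X Y) T \<and> T \<noteq> {} \<longrightarrow> W n \<inter> T \<noteq> {}" by (rule spec)
        then show ?thesis using that by simp
      qed
      show ?thesis unfolding dense_intersects_open
      proof (intro allI impI)
        fix T assume T: "openin (prod_topology X Y) T \<and> T \<noteq> {}"
        then obtain a b where ab: "(a,b) \<in> T" by auto
        have "\<forall>x y. (x,y) \<in> T \<longrightarrow> (\<exists>U V. openin X U \<and> openin Y V \<and> x \<in> U \<and> y \<in> V \<and> U \<times> V \<subseteq> T)"
          using T unfolding openin_prod_topology_alt by blast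
        from this[rule_format, OF ab]
        obtain U0 V0 where UV: "openin X U0" "openin Y V0" "a \<in> U0" "b \<in> V0" "U0 \<times> V0 \<subseteq> T"
          by blast
        have PB: "PB X Y W B U0 V0"
        proof
          show "openin (prod_topology X Y) (W n)" for n by (rule W_open)
          show "W n \<inter> T \<noteq> {}" if "openin (prod_topology X Y) T" "T \<noteq> {}" for n T
            using that by (rule W_dense)
          show "openin Y (B y k)" if "y \<in> topspace Y" for y k using that by (rule B_open)
          show "y \<in> B y k" if "y \<in> topspace Y" for y k using that by (rule B_in)
          show "\<exists>k. B y k \<subseteq> Q" if "openin Y Q" "y \<in> Q" for Q y using that by (rule B_base)
          show "openin X U0" "openin Y V0" by (fact UV(1), fact UV(2))
          show "U0 \<noteq> {}" "V0 \<noteq> {}" using UV(3,4) by auto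
        qed
        then obtain x y where xy: "x \<in> U0" "y \<in> V0" "\<And>n. (x,y) \<in> W n"
          using PB.main[OF PB assms(1) assms(3)] by blast
        have "(x,y) \<in> T" using xy UV(5) by blast
        moreover have "(x,y) \<in> topspace (prod_topology X Y)" using openin_subset[of _ T] T calculation by blast
        moreover have "(x,y) \<in> \<Inter>\<G>" unfolding rW[symmetric] using xy(3) by simp
        ultimately show "(topspace (prod_topology X Y) \<inter> \<Inter>\<G>) \<inter> T \<noteq> {}" by blast
      qed
    qed
  qed
qed

end
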